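(* For every integer $n\ge2$ there is a complete weighted graph $G=(V,w)$ on $n$ vertices with $\mathrm{cdim}(G)=2n-3$ and minimum cut weight $1$, such that for every $v\in V$ the star cut $\Delta(\{v\})$ is a minimum cut.
   Context: A complete weighted graph $G=(V,w)$ assigns a positive weight to every unordered pair of distinct vertices. For $\emptyset\ne X\subsetneq V$, $\Delta(X)$ is the set of edges with exactly one endpoint in $X$, of weight equal to the sum of their weights. $\mathcal{M}(G)$ is the set of minimum-weight cuts; $\chi(S)$ is the characteristic vector of $S$ indexed by the edges; $\mathrm{cdim}(G)=\dim\,\mathrm{span}\{\chi(S):S\in\mathcal{M}(G)\}$. *)

theory Defs
  imports "HOL-Analysis.Analysis" "HOL-Library.Function_Algebras"
begin

text \<open>Vertex set V = {0..<n}; edges of the complete graph are the unordered pairs {i,j}, i ~= j.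
  A weighting is a function w on edges (values off the edge set are irrelevant).\<close>

definition edges :: "nat \<Rightarrow> nat set set" where
  "edges n = {{i, j} | i j. i < n \<and> j < n \<and> i \<noteq> j}"

definition is_cut_side :: "nat \<Rightarrow> nat set \<Rightarrow> bool" where
  "is_cut_side n X \<longleftrightarrow> X \<noteq> {} \<and> X \<subset> {0..<n}"

definition delta :: "nat \<Rightarrow> nat set \<Rightarrow> nat set set" where
  "delta n X = {e \<in> edges n. card (e \<inter> X) = 1}"

definition cut_weight :: "nat \<Rightarrow> (nat set \<Rightarrow> real) \<Rightarrow> nat set \<Rightarrow> real" where
  "cut_weight n w X = sum w (delta n X)"

definition min_cut_value :: "nat \<Rightarrow> (nat set \<Rightarrow> real) \<Rightarrow> real" where
  "min_cut_value n w = Min {cut_weight n w X | X. is_cut_side n X}"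

definition min_cuts :: "nat \<Rightarrow> (nat set \<Rightarrow> real) \<Rightarrow> nat set set set" where
  "min_cuts n w = {delta n X | X. is_cut_side n X \<and> cut_weight n w X = min_cut_value n w}"

definition chi :: "nat set set \<Rightarrow> (nat set \<Rightarrow> real)" where
  "chi S = indicator S"

definition fscale :: "real \<Rightarrow> ('a \<Rightarrow> real) \<Rightarrow> ('a \<Rightarrow> real)" where
  "fscale c f = (\<lambda>x. c * f x)"

interpretation fvs: vector_space fscale
  by unfold_locales (auto simp: fscale_def algebra_simps fun_eq_iff)

definition cdim :: "nat \<Rightarrow> (nat set \<Rightarrow> real) \<Rightarrow> nat" where
  "cdim n w = fvs.dim (chi ` min_cuts n w)"

end

theory Submission
  imports Defs
begin


definition pp :: "nat \<Rightarrow> nat \<Rightarrow> nat" where "pp n v = min (max v 1) (n-2)"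
definition W :: "nat \<Rightarrow> nat \<Rightarrow> nat \<Rightarrow> real" where
  "W n i j = (1/2)^(nat \<bar>int (pp n i) - int (pp n j)\<bar>) / 2"

lemma W_sym: "W n i j = W n j i"
  unfolding W_def by (simp add: abs_minus_commute)

lemma W_pos: "W n i j > 0" unfolding W_def by simp

lemma W_mid: "1 \<le> i \<Longrightarrow> i \<le> j \<Longrightarrow> j \<le> n-2 \<Longrightarrow> W n i j = (1/2)^(j-i)/2"
  unfolding W_def pp_def by (simp add: nat_diff_distrib)

lemma W_0: "1 \<le> j \<Longrightarrow> j \<le> n-2 \<Longrightarrow> W n 0 j = (1/2)^(j-1)/2"
  unfolding W_def pp_def by (simp add: nat_diff_distrib)

lemma W_01: "3 \<le> n \<Longrightarrow> 2 \<le> j \<Longrightarrow> W n 0 j = W n 1 j"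
  unfolding W_def pp_def by simp

lemma W_last: "3 \<le> n \<Longrightarrow> 1 \<le> i \<Longrightarrow> i \<le> n-2 \<Longrightarrow> W n i (n-1) = (1/2)^(n-2-i)/2"
  unfolding W_def pp_def by (simp add: nat_diff_distrib)

lemma geo1: "a \<le> b \<Longrightarrow> (\<Sum>j\<in>{a<..b}. (1/2::real)^(j-a)) = 1 - (1/2)^(b-a)"
proof (induction b)
  case 0 then show ?case by simp
next
  case (Suc b)
  show ?case
  proof (cases "a = Suc b")
    case True then show ?thesis by simp
  next
    case False
    then have ab: "a \<le> b" using Suc.prems by simp
    have "{a<..Suc b} = insert (Suc b) {a<..b}" using ab by auto
    then have "(\<Sum>j\<in>{a<..Suc b}. (1/2::real)^(j-a)) = (1/2)^(Suc b - a) + (\<Sum>j\<in>{a<..b}. (1/2::real)^(j-a))"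
      using ab by simp
    also have "\<dots> = (1/2)^(Suc b - a) + 1 - (1/2)^(b-a)" using Suc.IH[OF ab] by simp
    also have "\<dots> = 1 - (1/2)^(Suc b - a)" using ab by (simp add: Suc_diff_le)
    finally show ?thesis .
  qed
qed

lemma geo2: "a \<le> b \<Longrightarrow> (\<Sum>i\<in>{a..<b}. (1/2::real)^(b-i)) = 1 - (1/2)^(b-a)"
proof (induction b)
  case 0 then show ?case by simp
next
  case (Suc b)
  show ?case
  proof (cases "a = Suc b")
    case True then show ?thesis by simp
  next
    case False
    then have ab: "a \<le> b" using Suc.prems by simp
    have "(\<Sum>i\<in>{a..<b}. (1/2::real)^(Suc b-i)) = (\<Sum>i\<in>{a..<b}. (1/2) * (1/2::real)^(b-i))"
      by (intro sum.cong) (auto simp: Suc_diff_le)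
    also have "\<dots> = (1/2) * (\<Sum>i\<in>{a..<b}. (1/2::real)^(b-i))" by (simp add: sum_distrib_left)
    also have "\<dots> = (1/2) * (1 - (1/2)^(b-a))" using Suc.IH[OF ab] by simp
    finally have h: "(\<Sum>i\<in>{a..<b}. (1/2::real)^(Suc b-i)) = (1/2) * (1 - (1/2)^(b-a))" .
    have "(\<Sum>i\<in>{a..<Suc b}. (1/2::real)^(Suc b-i)) = 1/2 + (\<Sum>i\<in>{a..<b}. (1/2::real)^(Suc b-i))"
      using ab by simp
    also have "\<dots> = 1 - (1/2)^(Suc b - a)" using h ab by (simp add: Suc_diff_le)
    finally show ?thesis .
  qed
qed

lemma L_half:
  assumes "3 \<le> n" "1 \<le> m" "m \<le> n-2"
  shows "(\<Sum>i<m. W n i m) = 1/2"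
proof -
  have "{..<m} = insert 0 {1..<m}" using assms by auto
  then have "(\<Sum>i<m. W n i m) = W n 0 m + (\<Sum>i\<in>{1..<m}. W n i m)" by simp
  also have "(\<Sum>i\<in>{1..<m}. W n i m) = (\<Sum>i\<in>{1..<m}. (1/2::real)^(m-i)) / 2"
    using assms by (simp add: W_mid sum_divide_distrib)
  also have "\<dots> = (1 - (1/2)^(m-1)) / 2" using assms by (simp add: geo2)
  finally show ?thesis using assms by (simp add: W_0 field_simps)
qed

lemma R_half:
  assumes "3 \<le> n" "1 \<le> m" "m \<le> n-2"
  shows "(\<Sum>j\<in>{m<..<n}. W n m j) = 1/2"
proof -
  have eq: "{m<..<n} = insert (n-1) {m<..n-2}" using assms by auto
  have "(\<Sum>j\<in>{m<..<n}. W n m j) = W n m (n-1) + (\<Sum>j\<in>{m<..n-2}. W n m j)"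
  proof -
    have ni: "n-1 \<notin> {m<..n-2}" using assms by (simp; arith)
    show ?thesis unfolding eq by (rule sum.insert[OF _ ni]) simp
  qed
  also have "(\<Sum>j\<in>{m<..n-2}. W n m j) = (\<Sum>j\<in>{m<..n-2}. (1/2::real)^(j-m)) / 2"
    using assms by (simp add: W_mid sum_divide_distrib)
  also have "\<dots> = (1 - (1/2)^(n-2-m)) / 2" using assms by (simp add: geo1)
  finally have "(\<Sum>j\<in>{m<..<n}. W n m j) = W n m (n-1) + (1 - (1/2)^(n-2-m)) / 2" .
  moreover have "W n m (n-1) = (1/2)^(n-2-m)/2" using W_last assms by blast
  ultimately show ?thesis by (simp add: field_simps)
qed

definition deg :: "nat \<Rightarrow> nat \<Rightarrow> real" where
  "deg n v = (\<Sum>j\<in>{0..<n}-{v}. W n v j)"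

lemma deg_one:
  assumes "3 \<le> n" "v \<le> n-2"
  shows "deg n v = 1"
proof (cases "v = 0")
  case True
  have "{0..<n}-{0} = insert 1 {1<..<n}" using assms by auto
  then have "deg n 0 = W n 0 1 + (\<Sum>j\<in>{1<..<n}. W n 0 j)" unfolding deg_def by simp
  also have "(\<Sum>j\<in>{1<..<n}. W n 0 j) = (\<Sum>j\<in>{1<..<n}. W n 1 j)"
    using assms by (intro sum.cong) (auto simp: W_01)
  also have "\<dots> = 1/2" using R_half[of n 1] assms by simp
  finally show ?thesis using True assms by (simp add: W_0)
next
  case False
  have "{0..<n}-{v} = {..<v} \<union> {v<..<n}" using assms by auto
  then have "deg n v = (\<Sum>j<v. W n v j) + (\<Sum>j\<in>{v<..<n}. W n v j)" unfolding deg_def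
    by (simp add: sum.union_disjoint[of "{..<v}" "{v<..<n}"] disjoint_iff)
  also have "(\<Sum>j<v. W n v j) = (\<Sum>j<v. W n j v)" by (simp add: W_sym)
  finally show ?thesis using L_half[of n v] R_half[of n v] assms False by simp
qed




definition C :: "nat \<Rightarrow> nat set \<Rightarrow> real" where
  "C n X = (\<Sum>i\<in>X. \<Sum>j\<in>{0..<n}-X. W n i j)"

definition wt :: "nat \<Rightarrow> nat set \<Rightarrow> real" where
  "wt n e = W n (Min e) (Max e)"

lemma wt_pair: "wt n {i,j} = W n i j"
  unfolding wt_def by (cases "i \<le> j") (auto simp: W_sym max_def min_def)

lemma delta_eq: "X \<subseteq> {0..<n} \<Longrightarrow> delta n X = (\<lambda>(i,j). {i,j}) ` (X \<times> ({0..<n}-X))"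
proof (intro equalityI subsetI)
  fix e assume X: "X \<subseteq> {0..<n}" and e: "e \<in> delta n X"
  then obtain a b where ab: "e = {a,b}" "a < n" "b < n" "a \<noteq> b" and c: "card ({a,b} \<inter> X) = 1"
    unfolding delta_def edges_def by auto
  show "e \<in> (\<lambda>(i,j). {i,j}) ` (X \<times> ({0..<n}-X))"
  proof (cases "a \<in> X")
    case True
    then have "b \<notin> X" using c ab by (cases "b \<in> X") auto
    then show ?thesis using True ab by (auto intro!: image_eqI[of _ _ "(a,b)"])
  next
    case False
    then have "b \<in> X" using c ab by (cases "b \<in> X") auto
    then show ?thesis using False ab by (auto intro!: image_eqI[of _ _ "(b,a)"])
  qed
next
  fix e assume X: "X \<subseteq> {0..<n}" and e: "e \<in> (\<lambda>(i,j). {i,j}) ` (X \<times> ({0..<n}-X))"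
  then obtain i j where ij: "e = {i,j}" "i \<in> X" "j \<in> {0..<n}-X" by auto
  then have "i \<noteq> j" "i < n" using X by auto
  moreover have "{i,j} \<inter> X = {i}" using ij by auto
  ultimately show "e \<in> delta n X" using ij unfolding delta_def edges_def by auto
qed

lemma cut_C: assumes "X \<subseteq> {0..<n}" shows "cut_weight n (wt n) X = C n X"
proof -
  have inj: "inj_on (\<lambda>(i,j). {i,j}) (X \<times> ({0..<n}-X))"
    by (auto simp: inj_on_def doubleton_eq_iff)
  have "cut_weight n (wt n) X = (\<Sum>(i,j)\<in>X \<times> ({0..<n}-X). wt n {i,j})"
    unfolding cut_weight_def delta_eq[OF assms] by (subst sum.reindex[OF inj]) (simp add: comp_def case_prod_unfold)
  also have "\<dots> = (\<Sum>(i,j)\<in>X \<times> ({0..<n}-X). W n i j)" by (simp add: wt_pair)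
  also have "\<dots> = C n X" unfolding C_def by (simp add: sum.cartesian_product)
  finally show ?thesis .
qed

lemma C_compl: assumes "X \<subseteq> {0..<n}" shows "C n ({0..<n} - X) = C n X"
proof -
  have e: "{0..<n} - ({0..<n} - X) = X" using assms by auto
  show ?thesis unfolding C_def e by (subst sum.swap) (simp add: W_sym)
qed

lemma C_single: "C n {v} = deg n v" unfolding C_def deg_def by simp

lemma C_insert:
  assumes X: "X \<subseteq> {0..<n}" and k: "k < n" "k \<notin> X"
  shows "C n (insert k X) = C n X + deg n k - 2 * (\<Sum>i\<in>X. W n i k)"
proof -
  let ?V = "{0..<n}"
  let ?U = "?V - insert k X"
  have fX: "finite X" using X finite_subset by blast
  have eq1: "?V - X = insert k ?U" using k by auto
  have s1: "(\<Sum>j\<in>?V-X. W n i j) = W n i k + (\<Sum>j\<in>?U. W n i j)" for i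
    unfolding eq1 by (rule sum.insert) auto
  have eq2: "?V - {k} = X \<union> ?U" using X k by auto
  have d: "deg n k = (\<Sum>j\<in>X. W n k j) + (\<Sum>j\<in>?U. W n k j)"
    unfolding deg_def eq2 by (rule sum.union_disjoint) (use fX in auto)
  have c1: "C n (insert k X) = (\<Sum>j\<in>?U. W n k j) + (\<Sum>i\<in>X. \<Sum>j\<in>?U. W n i j)"
    unfolding C_def by (rule sum.insert) (use fX k in auto)
  have c2: "C n X = (\<Sum>i\<in>X. W n i k) + (\<Sum>i\<in>X. \<Sum>j\<in>?U. W n i j)"
    unfolding C_def s1 by (rule sum.distrib)
  have c3: "(\<Sum>j\<in>X. W n k j) = (\<Sum>i\<in>X. W n i k)" by (simp add: W_sym)
  show ?thesis using c1 c2 c3 d by linarith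
qed




lemma C_prefix: "3 \<le> n \<Longrightarrow> m \<le> n-2 \<Longrightarrow> C n {0..m} = 1"
proof (induction m)
  case 0 then show ?case using deg_one[of n 0] by (simp add: C_single)
next
  case (Suc m)
  have e: "{0..Suc m} = insert (Suc m) {0..m}" by auto
  have "C n {0..Suc m} = C n {0..m} + deg n (Suc m) - 2 * (\<Sum>i\<in>{0..m}. W n i (Suc m))"
    unfolding e using Suc.prems by (intro C_insert) auto
  moreover have "(\<Sum>i\<in>{0..m}. W n i (Suc m)) = 1/2"
    using L_half[of n "Suc m"] Suc.prems by (simp add: atLeast0AtMost lessThan_Suc_atMost[symmetric])
  moreover have "deg n (Suc m) = 1" using deg_one Suc.prems by blast
  ultimately show ?case using Suc by simp
qed

lemma C_main:
  assumes "3 \<le> n"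
  shows "k \<le> n-1 \<Longrightarrow> Y \<subseteq> {0..<k} \<Longrightarrow> Y \<noteq> {} \<Longrightarrow>
     1 \<le> C n Y \<and> (C n Y = 1 \<longrightarrow> (\<exists>v. Y={v}) \<or> (\<exists>m. Y = {0..m}))"
proof (induction k arbitrary: Y)
  case 0 then show ?case by auto
next
  case (Suc k)
  show ?case
  proof (cases "k \<in> Y")
    case False
    then have "Y \<subseteq> {0..<k}" using Suc.prems(2) by (auto simp: subset_iff less_Suc_eq)
    then show ?thesis using Suc.IH Suc.prems by simp
  next
    case True
    define Y' where "Y' = Y - {k}"
    have Y': "Y' \<subseteq> {0..<k}" using Suc.prems unfolding Y'_def by auto
    have YY: "Y = insert k Y'" using True unfolding Y'_def by auto
    have kn: "k \<le> n-2" using Suc.prems by simp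
    show ?thesis
    proof (cases "Y' = {}")
      case True
      then show ?thesis using YY deg_one[OF assms kn] by (simp add: C_single)
    next
      case False
      then obtain i0 where "i0 \<in> Y'" by auto
      then have k1: "1 \<le> k" using Y' by auto
      have IH: "1 \<le> C n Y' \<and> (C n Y' = 1 \<longrightarrow> (\<exists>v. Y'={v}) \<or> (\<exists>m. Y' = {0..m}))"
        using Suc.IH[OF _ Y' False] Suc.prems by simp
      define A where "A = (\<Sum>i\<in>Y'. W n i k)"
      have CY: "C n Y = C n Y' + 1 - 2 * A"
        unfolding YY A_def using Y' Suc.prems deg_one[OF assms kn]
        by (subst C_insert) auto
      have tot: "(\<Sum>i\<in>{..<k}. W n i k) = 1/2" using L_half[OF assms k1 kn] .
      have sub: "Y' \<subseteq> {..<k}" using Y' by auto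
      have split: "(\<Sum>i\<in>{..<k}. W n i k) = A + (\<Sum>i\<in>{..<k}-Y'. W n i k)"
        unfolding A_def using sum.subset_diff[OF sub, of "\<lambda>i. W n i k"] by simp
      have nn: "0 \<le> (\<Sum>i\<in>{..<k}-Y'. W n i k)" by (intro sum_nonneg) (simp add: less_imp_le W_pos)
      have A_le: "A \<le> 1/2" using tot split nn by linarith
      have ge: "1 \<le> C n Y" using CY IH A_le by linarith
      have eq: "Y = {0..k}" if c1: "C n Y = 1"
      proof -
        have A12: "A = 1/2" using CY IH A_le c1 by linarith
        have "Y' = {..<k}"
        proof (rule ccontr)
          assume "Y' \<noteq> {..<k}"
          then obtain i where i: "i \<in> {..<k}-Y'" using sub by auto
          have "W n i k \<le> (\<Sum>i\<in>{..<k}-Y'. W n i k)"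
            using i by (intro member_le_sum) (simp_all add: less_imp_le W_pos)
          then show False using W_pos[of n i k] tot split A12 by linarith
        qed
        then show ?thesis using YY by auto
      qed
      show ?thesis using ge eq by blast
    qed
  qed
qed




lemma card_pair_inter: "a \<noteq> b \<Longrightarrow> card ({a,b} \<inter> X) = 1 \<longleftrightarrow> (a \<in> X) \<noteq> (b \<in> X)"
  by (cases "a \<in> X"; cases "b \<in> X") auto

lemma delta_compl: assumes "X \<subseteq> {0..<n}" shows "delta n ({0..<n} - X) = delta n X"
proof -
  have "card (e \<inter> ({0..<n} - X)) = 1 \<longleftrightarrow> card (e \<inter> X) = 1" if "e \<in> edges n" for e
  proof -
    from that obtain a b where ab: "e = {a,b}" "a < n" "b < n" "a \<noteq> b" unfolding edges_def by auto
    show ?thesis unfolding ab(1) using card_pair_inter[of a b X] card_pair_inter[of a b "{0..<n}-X"] ab by auto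
  qed
  then show ?thesis unfolding delta_def by auto
qed

lemma reduce:
  assumes "is_cut_side n X"
  shows "\<exists>Y. Y \<subseteq> {0..<n-1} \<and> Y \<noteq> {} \<and> delta n X = delta n Y \<and> C n X = C n Y"
proof (cases "n-1 \<in> X")
  case False
  have "X \<subseteq> {0..<n-1}"
  proof
    fix x assume "x \<in> X"
    then have "x < n" "x \<noteq> n-1" using assms False unfolding is_cut_side_def by auto
    then show "x \<in> {0..<n-1}" by simp
  qed
  then show ?thesis using assms unfolding is_cut_side_def by blast
next
  case True
  let ?Y = "{0..<n} - X"
  have X: "X \<subseteq> {0..<n}" using assms unfolding is_cut_side_def by auto
  have "?Y \<subseteq> {0..<n-1}"
  proof
    fix x assume "x \<in> ?Y"
    then have "x < n" "x \<noteq> n-1" using True by auto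
    then show "x \<in> {0..<n-1}" by simp
  qed
  moreover have "?Y \<noteq> {}" using assms unfolding is_cut_side_def by auto
  ultimately show ?thesis using delta_compl[OF X] C_compl[OF X] by metis
qed

definition FF :: "nat \<Rightarrow> nat set set" where
  "FF n = {{v} | v. v < n} \<union> {{0..m} | m. 1 \<le> m \<and> m \<le> n-3}"

lemma side_single: assumes "2 \<le> n" "v < n" shows "is_cut_side n {v}"
proof -
  have a: "{v} \<subseteq> {0..<n}" using assms by simp
  have "(if v = 0 then 1 else 0) \<in> {0..<n} - {v}" using assms by simp
  then have "{v} \<noteq> {0..<n}" by blast
  then show ?thesis using a unfolding is_cut_side_def by blast
qed

lemma side_prefix: assumes "m < n - 1" shows "is_cut_side n {0..m}"
proof -
  have a: "{0..m} \<subseteq> {0..<n}" using assms by auto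
  have "n - 1 \<in> {0..<n} - {0..m}" using assms by simp
  then have "{0..m} \<noteq> {0..<n}" by blast
  then show ?thesis using a unfolding is_cut_side_def by auto
qed

lemma C_last: assumes "3 \<le> n" shows "C n {n-1} = 1"
proof -
  have e: "{0..<n} - {0..n-2} = {n-1}"
  proof -
    have "x \<in> {0..<n} - {0..n-2} \<longleftrightarrow> x = n-1" for x using assms by (simp; arith)
    then show ?thesis by blast
  qed
  have s: "{0..n-2} \<subseteq> {0..<n}" using assms by auto
  have "C n {n-1} = C n {0..n-2}" using C_compl[OF s] unfolding e .
  then show ?thesis using C_prefix[of n "n-2"] assms by simp
qed

lemma cut_one:
  assumes "3 \<le> n" "Y \<in> FF n"
  shows "is_cut_side n Y \<and> C n Y = 1"
proof -
  { fix v assume v: "v < n"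
    have "C n {v} = 1"
    proof (cases "v = n-1")
      case True
      then show ?thesis using C_last[OF assms(1)] by simp
    next
      case False
      then have "v \<le> n-2" using v by simp
      then show ?thesis using deg_one[of n v] assms by (simp add: C_single)
    qed
    moreover have "is_cut_side n {v}" using v assms side_single by simp
    ultimately have "is_cut_side n {v} \<and> C n {v} = 1" by blast }
  moreover
  { fix m assume m: "1 \<le> m" "m \<le> n-3"
    have "C n {0..m} = 1" using C_prefix[of n m] m assms by simp
    moreover have "is_cut_side n {0..m}" using m assms side_prefix by simp
    ultimately have "is_cut_side n {0..m} \<and> C n {0..m} = 1" by blast }
  ultimately show ?thesis using assms(2) unfolding FF_def by blast
qed

lemma cut_side_sub: "is_cut_side n X \<Longrightarrow> X \<subseteq> {0..<n}" unfolding is_cut_side_def by auto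

lemma min_val:
  assumes "3 \<le> n"
  shows "min_cut_value n (wt n) = 1"
  unfolding min_cut_value_def
proof (rule Min_eqI)
  show "finite {cut_weight n (wt n) X |X. is_cut_side n X}"
  proof (rule finite_subset)
    show "{cut_weight n (wt n) X |X. is_cut_side n X} \<subseteq> (\<lambda>X. cut_weight n (wt n) X) ` Pow {0..<n}"
      using cut_side_sub by blast
  qed simp
next
  fix y assume "y \<in> {cut_weight n (wt n) X |X. is_cut_side n X}"
  then obtain X where X: "is_cut_side n X" "y = cut_weight n (wt n) X" by auto
  obtain Y where Y: "Y \<subseteq> {0..<n-1}" "Y \<noteq> {}" "C n X = C n Y" using reduce[OF X(1)] by blast
  have "1 \<le> C n Y" using C_main[OF assms, of "n-1" Y] Y by simp
  then show "1 \<le> y" using X Y cut_C[OF cut_side_sub[OF X(1)]] by simp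
next
  have "{0} \<in> FF n" unfolding FF_def using assms by auto
  then have "is_cut_side n {0} \<and> C n {0} = 1" using cut_one assms by blast
  then show "1 \<in> {cut_weight n (wt n) X |X. is_cut_side n X}"
    using cut_C[OF cut_side_sub] by fastforce
qed

lemma min_cuts_eq:
  assumes "3 \<le> n"
  shows "min_cuts n (wt n) = delta n ` FF n"
proof (intro equalityI subsetI)
  fix D assume "D \<in> min_cuts n (wt n)"
  then obtain X where X: "D = delta n X" "is_cut_side n X" "cut_weight n (wt n) X = 1"
    unfolding min_cuts_def min_val[OF assms] by auto
  obtain Y where Y: "Y \<subseteq> {0..<n-1}" "Y \<noteq> {}" "delta n X = delta n Y" "C n X = C n Y"
    using reduce[OF X(2)] by blast
  have "C n Y = 1" using X Y cut_C[OF cut_side_sub[OF X(2)]] by simp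
  then have c: "(\<exists>v. Y={v}) \<or> (\<exists>m. Y = {0..m})" using C_main[OF assms, of "n-1" Y] Y by simp
  show "D \<in> delta n ` FF n"
  proof (cases "\<exists>v. Y = {v}")
    case True
    then obtain v where "Y = {v}" by auto
    moreover have "v < n" using Y \<open>Y = {v}\<close> by auto
    ultimately have "Y \<in> FF n" unfolding FF_def by auto
    then show ?thesis using X Y by auto
  next
    case False
    then obtain m where m: "Y = {0..m}" using c by auto
    have "m \<in> Y" using m by simp
    then have mn: "m \<le> n-2" using Y(1) by auto
    show ?thesis
    proof (cases "m = 0")
      case True
      then have "Y = {0}" using m by auto
      then show ?thesis using False by auto
    next
      case m0: False
      show ?thesis
      proof (cases "m = n-2")
        case True
        have Ysub: "Y \<subseteq> {0..<n}" using Y by auto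
        have "x \<in> {0..<n} - Y \<longleftrightarrow> x = n-1" for x using True m assms by (simp; arith)
        then have "{0..<n} - Y = {n-1}" by blast
        then have "delta n Y = delta n {n-1}" using delta_compl[OF Ysub] by simp
        moreover have "{n-1} \<in> FF n" using assms unfolding FF_def by auto
        ultimately show ?thesis using X Y by auto
      next
        case False
        then have "Y \<in> FF n" using m m0 mn unfolding FF_def by auto
        then show ?thesis using X Y by auto
      qed
    qed
  qed
next
  fix D assume "D \<in> delta n ` FF n"
  then obtain Y where Y: "D = delta n Y" "Y \<in> FF n" by auto
  have "is_cut_side n Y \<and> C n Y = 1" using cut_one[OF assms Y(2)] .
  then show "D \<in> min_cuts n (wt n)"
    unfolding min_cuts_def min_val[OF assms] using Y cut_C[OF cut_side_sub] by fastforce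
qed




lemma sum_fun_apply: "(\<Sum>x\<in>A. (f x :: 'a \<Rightarrow> real)) e = (\<Sum>x\<in>A. f x e)"
  by (induction A rule: infinite_finite_induct) (auto simp: plus_fun_def zero_fun_def)

lemma indep_family:
  fixes g :: "'i \<Rightarrow> ('a \<Rightarrow> real)"
  assumes fin: "finite I"
    and H: "\<And>c. (\<Sum>x\<in>I. fscale (c x) (g x)) = 0 \<Longrightarrow> \<forall>x\<in>I. c x = 0"
  shows "inj_on g I \<and> fvs.independent (g ` I)"
proof -
  have inj: "inj_on g I"
  proof (rule inj_onI, rule ccontr)
    fix x y assume xy: "x \<in> I" "y \<in> I" "g x = g y" "x \<noteq> y"
    define c where "c = (\<lambda>z. if z = x then 1 else if z = y then -1 else (0::real))"
    have "(\<Sum>z\<in>I. fscale (c z) (g z)) = (\<Sum>z\<in>{x,y}. fscale (c z) (g z))"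
      using xy fin by (intro sum.mono_neutral_right) (auto simp: c_def fscale_def fun_eq_iff)
    also have "\<dots> = 0" using xy by (simp add: c_def fscale_def fun_eq_iff)
    finally have "\<forall>z\<in>I. c z = 0" by (rule H)
    then show False using xy by (auto simp: c_def)
  qed
  have "fvs.independent (g ` I)"
  proof (rule fvs.independent_if_scalars_zero)
    show "finite (g ` I)" using fin by simp
  next
    fix f v assume s: "(\<Sum>v\<in>g ` I. fscale (f v) v) = 0" and v: "v \<in> g ` I"
    have "(\<Sum>x\<in>I. fscale ((f \<circ> g) x) (g x)) = 0"
      using s by (simp add: sum.reindex[OF inj])
    then have "\<forall>x\<in>I. (f \<circ> g) x = 0" by (rule H)
    then show "f v = 0" using v by auto
  qed
  then show ?thesis using inj by blast
qed

lemma chi_delta_pair: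
  assumes "i < n" "j < n" "i \<noteq> j"
  shows "chi (delta n X) {i,j} = (if (i \<in> X) \<noteq> (j \<in> X) then 1 else 0)"
proof -
  have "{i,j} \<in> edges n" using assms unfolding edges_def by auto
  then show ?thesis unfolding chi_def delta_def using card_pair_inter[OF assms(3), of X]
    by (auto simp: indicator_def)
qed




definition GG :: "nat + nat \<Rightarrow> nat set" where
  "GG x = (case x of Inl v \<Rightarrow> {v} | Inr m \<Rightarrow> {0..m})"

definition II :: "nat \<Rightarrow> (nat + nat) set" where
  "II n = Inl ` {..<n} \<union> Inr ` {1..n-3}"

lemma FF_II: "FF n = GG ` II n"
proof (intro equalityI subsetI)
  fix Y assume "Y \<in> FF n"
  then consider v where "v < n" "Y = {v}" | m where "1 \<le> m" "m \<le> n-3" "Y = {0..m}"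
    unfolding FF_def by auto
  then show "Y \<in> GG ` II n"
  proof cases
    case 1 then show ?thesis unfolding II_def by (intro image_eqI[of _ _ "Inl v"]) (auto simp: GG_def)
  next
    case 2 then show ?thesis unfolding II_def by (intro image_eqI[of _ _ "Inr m"]) (auto simp: GG_def)
  qed
next
  fix Y assume "Y \<in> GG ` II n"
  then show "Y \<in> FF n" unfolding FF_def II_def GG_def by auto
qed

lemma finite_II: "finite (II n)" unfolding II_def by simp

lemma card_II: "card (II n) = n + (n-3)"
  unfolding II_def by (subst card_Un_disjoint) (auto simp: card_image)

definition BB :: "nat \<Rightarrow> (nat \<Rightarrow> real) \<Rightarrow> nat \<Rightarrow> nat \<Rightarrow> real" where
  "BB n b i j = (\<Sum>m\<in>{m\<in>{1..n-3}. i \<le> m \<and> m < j}. b m)"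

lemma eval_eq:
  assumes z: "(\<Sum>x\<in>II n. fscale (c x) (chi (delta n (GG x)))) = 0"
    and ij: "i < j" "j < n"
  shows "c (Inl i) + c (Inl j) + BB n (\<lambda>m. c (Inr m)) i j = 0"
proof -
  have in_: "i < n" "i \<noteq> j" using ij by auto
  have "0 = (\<Sum>x\<in>II n. fscale (c x) (chi (delta n (GG x)))) {i,j}" using z by simp
  also have "\<dots> = (\<Sum>x\<in>II n. c x * chi (delta n (GG x)) {i,j})"
    by (simp add: sum_fun_apply fscale_def)
  also have "\<dots> = (\<Sum>x\<in>Inl ` {..<n}. c x * chi (delta n (GG x)) {i,j})
                 + (\<Sum>x\<in>Inr ` {1..n-3}. c x * chi (delta n (GG x)) {i,j})"
    unfolding II_def by (rule sum.union_disjoint) auto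
  also have "(\<Sum>x\<in>Inl ` {..<n}. c x * chi (delta n (GG x)) {i,j})
      = (\<Sum>v<n. (if v = i then c (Inl v) else 0) + (if v = j then c (Inl v) else 0))"
    using in_(2) by (subst sum.reindex) (auto intro!: sum.cong simp: GG_def chi_delta_pair[OF in_(1) ij(2) in_(2)])
  also have "\<dots> = c (Inl i) + c (Inl j)" using ij in_ by (simp add: sum.distrib)
  also have "(\<Sum>x\<in>Inr ` {1..n-3}. c x * chi (delta n (GG x)) {i,j})
      = (\<Sum>m\<in>{1..n-3}. if i \<le> m \<and> m < j then c (Inr m) else 0)"
    using ij by (subst sum.reindex) (auto intro!: sum.cong simp: GG_def chi_delta_pair[OF in_(1) ij(2) in_(2)])
  also have "\<dots> = BB n (\<lambda>m. c (Inr m)) i j"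
    unfolding BB_def by (rule sum.inter_filter[symmetric]) simp
  finally show ?thesis by simp
qed

lemma II_indep:
  assumes n: "3 \<le> n"
    and z: "(\<Sum>x\<in>II n. fscale (c x) (chi (delta n (GG x)))) = 0"
  shows "\<forall>x\<in>II n. c x = 0"
proof -
  define a where "a v = c (Inl v)" for v
  define b where "b m = c (Inr m)" for m
  have E: "a i + a j + BB n b i j = 0" if "i < j" "j < n" for i j
    using eval_eq[OF z that] unfolding a_def b_def by simp
  have mid: "a j = 0" if j: "1 \<le> j" "j \<le> n-2" for j
  proof -
    have "BB n b 0 j + BB n b j (n-1) = BB n b 0 (n-1)"
    proof -
      have e: "{m\<in>{1..n-3}. 0 \<le> m \<and> m < n-1} = {m\<in>{1..n-3}. 0 \<le> m \<and> m < j} \<union> {m\<in>{1..n-3}. j \<le> m \<and> m < n-1}"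
        by auto
      show ?thesis unfolding BB_def e by (subst sum.union_disjoint) auto
    qed
    moreover have "a 0 + a j + BB n b 0 j = 0" using E[of 0 j] j n by simp
    moreover have "a j + a (n-1) + BB n b j (n-1) = 0" using E[of j "n-1"] j n by simp
    moreover have "a 0 + a (n-1) + BB n b 0 (n-1) = 0" using E[of 0 "n-1"] n by simp
    ultimately show ?thesis by linarith
  qed
  have a0: "a 0 = 0"
  proof -
    have "BB n b 0 1 = 0" unfolding BB_def
      by (rule sum.neutral) auto
    moreover have "a 0 + a 1 + BB n b 0 1 = 0" using E[of 0 1] n by simp
    ultimately show ?thesis using mid[of 1] n by simp
  qed
  have al: "a (n-1) = 0"
  proof -
    have e: "{m\<in>{1..n-3}. n-2 \<le> m \<and> m < n-1} = {}" by auto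
    have "BB n b (n-2) (n-1) = 0" unfolding BB_def e by simp
    moreover have "a (n-2) + a (n-1) + BB n b (n-2) (n-1) = 0" using E[of "n-2" "n-1"] n by simp
    ultimately show ?thesis using mid[of "n-2"] n by simp
  qed
  have aall: "a v = 0" if "v < n" for v
  proof -
    show ?thesis
    proof (cases "v = 0")
      case True then show ?thesis using a0 by simp
    next
      case False
      show ?thesis
      proof (cases "v = n-1")
        case True then show ?thesis using al by simp
      next
        case F2: False
        have "1 \<le> v" "v \<le> n-2" using False F2 that by auto
        then show ?thesis using mid by simp
      qed
    qed
  qed
  have ball: "b m = 0" if m: "1 \<le> m" "m \<le> n-3" for m
  proof -
    have "{k\<in>{1..n-3}. m \<le> k \<and> k < Suc m} = {m}" using m by auto
    then have "BB n b m (Suc m) = b m" unfolding BB_def by simp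
    moreover have "a m + a (Suc m) + BB n b m (Suc m) = 0" using E[of m "Suc m"] m n by simp
    ultimately show ?thesis using aall[of m] aall[of "Suc m"] m n by simp
  qed
  show ?thesis unfolding II_def using aall ball unfolding a_def b_def by auto
qed




lemma big_case:
  assumes n: "3 \<le> n"
  shows "\<exists>w :: nat set \<Rightarrow> real.
           (\<forall>e \<in> edges n. w e > 0) \<and>
           cdim n w = 2 * n - 3 \<and>
           min_cut_value n w = 1 \<and>
           (\<forall>v < n. delta n {v} \<in> min_cuts n w)"
proof (intro exI conjI)
  show "\<forall>e \<in> edges n. wt n e > 0" by (simp add: wt_def W_pos)
  show mv: "min_cut_value n (wt n) = 1" using min_val[OF n] .
  let ?g = "\<lambda>x. chi (delta n (GG x))"
  have img: "chi ` min_cuts n (wt n) = ?g ` II n"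
    unfolding min_cuts_eq[OF n] FF_II by (simp add: image_image)
  have ii: "inj_on ?g (II n) \<and> fvs.independent (?g ` II n)"
    by (rule indep_family[OF finite_II]) (rule II_indep[OF n])
  have "cdim n (wt n) = card (?g ` II n)"
    unfolding cdim_def img using ii fvs.dim_eq_card_independent by blast
  also have "\<dots> = card (II n)" using ii card_image by blast
  also have "\<dots> = 2 * n - 3" using n card_II[of n] by simp
  finally show "cdim n (wt n) = 2 * n - 3" .
  show "\<forall>v < n. delta n {v} \<in> min_cuts n (wt n)"
    unfolding min_cuts_eq[OF n] FF_def by blast
qed

lemma edges2: "edges 2 = {{0,1}}"
proof (intro equalityI subsetI)
  fix e assume "e \<in> edges 2"
  then obtain i j where ij: "e = {i,j}" "i < 2" "j < 2" "i \<noteq> j" unfolding edges_def by auto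
  then have "(i = 0 \<and> j = 1) \<or> (i = 1 \<and> j = 0)" by linarith
  then show "e \<in> {{0,1}}"
  proof
    assume "i = 0 \<and> j = 1" then show ?thesis using ij by simp
  next
    assume "i = 1 \<and> j = 0" then show ?thesis using ij by (simp add: insert_commute)
  qed
next
  fix e assume "e \<in> {{0::nat,1}}"
  then have "e = {0,1}" by simp
  then show "e \<in> edges 2" unfolding edges_def
    by (intro CollectI exI[of _ 0] exI[of _ 1]) simp
qed

lemma two_eq: "{0..<2::nat} = {0,1}" by auto

lemma side2: "is_cut_side 2 X \<longleftrightarrow> X = {0} \<or> X = {1}"
proof
  assume "is_cut_side 2 X"
  then have ne: "X \<noteq> {}" and sub: "X \<subseteq> {0,1}" and nf: "X \<noteq> {0,1}"
    unfolding is_cut_side_def two_eq by auto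
  have h: "x \<in> X \<Longrightarrow> x = 0 \<or> x = 1" for x using sub by blast
  show "X = {0} \<or> X = {1}"
  proof (cases "0 \<in> X")
    case True
    have "1 \<notin> X"
    proof
      assume "1 \<in> X" then have "X = {0,1}" using True sub by blast
      then show False using nf by blast
    qed
    then have "X = {0}" using True h by blast
    then show ?thesis by blast
  next
    case False
    obtain x where "x \<in> X" using ne by blast
    then have "1 \<in> X" using False h by metis
    then have "X = {1}" using False h by blast
    then show ?thesis by blast
  qed
next
  assume "X = {0} \<or> X = {1}"
  then show "is_cut_side 2 X" unfolding is_cut_side_def two_eq by auto
qed

lemma delta2: assumes "is_cut_side 2 X" shows "delta 2 X = {{0,1}}"
proof -
  have "X = {0} \<or> X = {1}" using assms unfolding side2 .
  then have c: "card ({0::nat,1} \<inter> X) = 1" by (elim disjE) simp_all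
  have "{e \<in> {{0::nat,1}}. card (e \<inter> X) = 1} = {{0,1}}" using c by blast
  then show ?thesis unfolding delta_def edges2 .
qed

lemma lt2: "(v::nat) < 2 \<Longrightarrow> {v} = {0} \<or> {v} = {1}"
proof -
  assume "v < 2"
  then have "v = 0 \<or> v = 1" by linarith
  then show ?thesis by (elim disjE) simp_all
qed

lemma side2_0: "is_cut_side 2 {0}" using side2 by blast

lemma small_case:
  shows "\<exists>w :: nat set \<Rightarrow> real.
           (\<forall>e \<in> edges 2. w e > 0) \<and>
           cdim 2 w = 2 * 2 - 3 \<and>
           min_cut_value 2 w = 1 \<and>
           (\<forall>v < 2. delta 2 {v} \<in> min_cuts 2 w)"
proof (intro exI conjI)
  let ?w = "\<lambda>_::nat set. 1::real"
  show "\<forall>e \<in> edges 2. ?w e > 0" by simp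
  have cw: "cut_weight 2 ?w X = 1" if "is_cut_side 2 X" for X
    unfolding cut_weight_def delta2[OF that] by simp
  have s: "{cut_weight 2 ?w X |X. is_cut_side 2 X} = {1}"
  proof (intro equalityI subsetI)
    fix y assume "y \<in> {cut_weight 2 ?w X |X. is_cut_side 2 X}"
    then obtain X where "is_cut_side 2 X" "y = cut_weight 2 ?w X" by blast
    then show "y \<in> {1}" using cw by simp
  next
    fix y assume "y \<in> {1::real}"
    then have "y = cut_weight 2 ?w {0}" using cw[OF side2_0] by simp
    then show "y \<in> {cut_weight 2 ?w X |X. is_cut_side 2 X}" using side2_0 by blast
  qed
  show mv: "min_cut_value 2 ?w = 1" unfolding min_cut_value_def s by simp
  have mc: "min_cuts 2 ?w = {{{0,1}}}"
  proof (intro equalityI subsetI)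
    fix D assume "D \<in> min_cuts 2 ?w"
    then obtain X where "D = delta 2 X" "is_cut_side 2 X" unfolding min_cuts_def by blast
    then show "D \<in> {{{0,1}}}" using delta2 by simp
  next
    fix D assume "D \<in> {{{0::nat,1}}}"
    then have "D = delta 2 {0}" using delta2[OF side2_0] by simp
    moreover have "cut_weight 2 ?w {0} = min_cut_value 2 ?w" using cw[OF side2_0] mv by simp
    ultimately show "D \<in> min_cuts 2 ?w" unfolding min_cuts_def using side2_0 by blast
  qed
  have nz: "chi {{0::nat,1}} \<noteq> 0"
  proof
    assume "chi {{0::nat,1}} = 0"
    then have "chi {{0::nat,1}} {0,1} = 0" by simp
    then show False by (simp add: chi_def)
  qed
  have "cdim 2 ?w = card {chi {{0::nat,1}}}"
    unfolding cdim_def mc image_insert image_empty using nz by (intro fvs.dim_eq_card_independent) simp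
  then show "cdim 2 ?w = 2 * 2 - 3" by simp
  show "\<forall>v < 2. delta 2 {v} \<in> min_cuts 2 ?w"
  proof (intro allI impI)
    fix v :: nat assume "v < 2"
    then have "{v} = {0} \<or> {v} = {1}" by (rule lt2)
    then have "is_cut_side 2 {v}" unfolding side2 .
    then have "delta 2 {v} = {{0,1}}" by (rule delta2)
    then show "delta 2 {v} \<in> min_cuts 2 ?w" unfolding mc by simp
  qed
qed

theorem theorem16:
  fixes n :: nat
  assumes "n \<ge> 2"
  shows "\<exists>w :: nat set \<Rightarrow> real.
           (\<forall>e \<in> edges n. w e > 0) \<and>
           cdim n w = 2 * n - 3 \<and>
           min_cut_value n w = 1 \<and>
           (\<forall>v < n. delta n {v} \<in> min_cuts n w)"
proof (cases "n = 2")
  case True then show ?thesis using small_case by blast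
next
  case False then have "3 \<le> n" using assms by linarith
  then show ?thesis by (rule big_case)
qed


end
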